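(* Fix $r>0$ and a tiling of the plane by regular hexagons of side length $r$. For each hexagon (cell) of the tiling, its grid circle is the closed disk of radius $r$ centered at the center of the hexagon (the circumscribed disk of the hexagon). Then every closed disk of radius $r$ in the plane is contained in the union of the grid circles of at most $5$ cells of the tiling. *)

theory Defs
  imports "HOL-Analysis.Analysis"
begin

text \<open>A tiling of the plane by regular
hexagons of side r is, up to a rotation by angle th and a translation by c, the
standard honeycomb: the hexagon centers form the triangular lattice generated by
sqrt 3 * r and sqrt 3 * r * cis(pi/3) (distance between adjacent centers = twice
the apothem = sqrt 3 * r).\<close>

definition hex_centers :: "real \<Rightarrow> complex \<Rightarrow> real \<Rightarrow> complex set" where
  "hex_centers r c th =
     {c + cis th * (of_int a * complex_of_real (sqrt 3 * r)
                    + of_int b * complex_of_real (sqrt 3 * r) * cis (pi / 3)) | a b. True}"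

definition hex_cell :: "real \<Rightarrow> real \<Rightarrow> complex \<Rightarrow> complex set" where
  "hex_cell r th z = convex hull {z + complex_of_real r * cis (th + pi / 6 + real k * pi / 3) | k. k < (6::nat)}"

definition hex_tiling :: "real \<Rightarrow> complex \<Rightarrow> real \<Rightarrow> complex set set" where
  "hex_tiling r c th = hex_cell r th ` hex_centers r c th"

definition grid_circle :: "real \<Rightarrow> complex \<Rightarrow> complex set" where
  "grid_circle r z = cball z r"

end

theory Submission
  imports Defs
begin

definition Qf :: "real \<Rightarrow> real \<Rightarrow> real" where
  "Qf x y = x * x + x * y + y * y"

lemma kiteA:
  fixes s t :: real
  assumes "s \<ge> 0" "t \<ge> 0" "2 * s + t \<le> 1" "s + 2 * t \<le> 1"
  shows "Qf s t \<le> 1/3"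
proof -
  have "0 \<le> s * (1 - 2 * s - t)" using assms by simp
  hence h1: "2 * (s * s) + s * t \<le> s" by (simp add: algebra_simps)
  have "0 \<le> t * (1 - s - 2 * t)" using assms by simp
  hence h2: "s * t + 2 * (t * t) \<le> t" by (simp add: algebra_simps)
  show ?thesis unfolding Qf_def using h1 h2 assms by linarith
qed

lemma slabB:
  fixes s t :: real
  assumes "t \<ge> -2/3" "t \<le> 0" "2 * s + t \<ge> 0" "2 * s + t \<le> 1"
  shows "Qf s t \<le> 1/3 \<or> Qf (s - 1) (t + 1) \<le> 1/3"
proof -
  define L where "L = s + t/2"
  define y where "y = - t"
  have q1: "Qf s t = L * L + 3/4 * (y * y)" unfolding Qf_def L_def y_def by (simp add: algebra_simps)
  have q2: "Qf (s - 1) (t + 1) = (1/2 - L) * (1/2 - L) + 3/4 * ((1 - y) * (1 - y))"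
    unfolding Qf_def L_def y_def by (simp add: algebra_simps)
  have L0: "0 \<le> L" "L \<le> 1/2" using assms unfolding L_def by auto
  have y0: "0 \<le> y" "y \<le> 2/3" using assms unfolding y_def by auto
  have key: "3 * (y * y) - 3 * y + 1 \<le> 1/3" if "1/3 \<le> y"
  proof -
    have "0 \<le> (y - 1/3) * (2/3 - y)" using that y0 by simp
    moreover have "(y - 1/3) * (2/3 - y) = y - y * y - 2/9" by (simp add: field_simps)
    ultimately show ?thesis by linarith
  qed
  show ?thesis
  proof (cases "s - t \<le> 1")
    case True
    hence Lb: "L \<le> 1 - 3/2 * y" unfolding L_def y_def by simp
    show ?thesis
    proof (cases "y \<le> 1/3")
      case True
      have "L * L \<le> 1/2 * (1/2)" using L0 by (intro mult_mono) auto
      moreover have "y * y \<le> 1/3 * (1/3)" using y0 True by (intro mult_mono) auto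
      ultimately show ?thesis using q1 by auto
    next
      case False
      have "L * L \<le> (1 - 3/2 * y) * (1 - 3/2 * y)" using L0 Lb by (intro mult_mono) auto
      hence "Qf s t \<le> 3 * (y * y) - 3 * y + 1" using q1 by (simp add: algebra_simps)
      thus ?thesis using key False by auto
    qed
  next
    case False
    hence Lb: "1/2 - L \<le> 3/2 * y - 1/2" unfolding L_def y_def by simp
    have "1/3 \<le> y" using Lb L0 by simp
    have "(1/2 - L) * (1/2 - L) \<le> (3/2 * y - 1/2) * (3/2 * y - 1/2)" using L0 Lb by (intro mult_mono) auto
    moreover have "(3/2 * y - 1/2) * (3/2 * y - 1/2) = 9/4 * (y * y) - 3/2 * y + 1/4" by (simp add: field_simps)
    moreover have "(1 - y) * (1 - y) = 1 - 2 * y + y * y" by (simp add: field_simps)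
    ultimately have "Qf (s - 1) (t + 1) \<le> 3 * (y * y) - 3 * y + 1" using q2 by argo
    thus ?thesis using key \<open>1/3 \<le> y\<close> by auto
  qed
qed

lemma Qf_sym: "Qf x y = Qf y x" unfolding Qf_def by (simp add: algebra_simps)

lemma Qf_nonneg: "0 \<le> Qf x y"
proof -
  have "Qf x y = (x + y/2) * (x + y/2) + 3/4 * (y * y)" unfolding Qf_def by (simp add: field_simps)
  thus ?thesis by simp
qed

lemma slabC:
  fixes s t :: real
  assumes "2 * s + t \<ge> 1" "t \<ge> 0" "t \<le> 1/3" "(2 * s + t - 1) * (2 * s + t - 1) \<le> 4/3"
  shows "Qf (s - 1) t \<le> 1/3"
proof -
  define Y where "Y = 2 * s + t - 1"
  have e: "4 * Qf (s - 1) t = (Y - 1) * (Y - 1) + 3 * (t * t)" unfolding Qf_def Y_def by (simp add: field_simps)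
  have Y0: "0 \<le> Y" "Y * Y \<le> 4/3" using assms unfolding Y_def by auto
  have "Y \<le> 2"
  proof (rule ccontr)
    assume "\<not> Y \<le> 2"
    hence "2 * 2 < Y * Y" by (intro mult_strict_mono) auto
    thus False using Y0 by simp
  qed
  hence "0 \<le> Y * (2 - Y)" using Y0 by simp
  moreover have "Y * (2 - Y) = 1 - (Y - 1) * (Y - 1)" by (simp add: field_simps)
  moreover have "t * t \<le> 1/3 * (1/3)" using assms by (intro mult_mono) auto
  ultimately show ?thesis using e by argo
qed

lemma coneD:
  fixes x1 x2 :: real
  assumes "Qf x1 x2 \<le> 1/3" "2 * x1 + x2 \<ge> 0" "x2 \<le> 0"
  shows "Qf (x1 - 1/2) x2 \<le> 1/3 \<or> Qf (x1 - 1/2) (x2 + 1) \<le> 1/3"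
proof -
  define L where "L = x1 + x2/2"
  define y where "y = - x2"
  have q0: "Qf x1 x2 = L * L + 3/4 * (y * y)" unfolding Qf_def L_def y_def by (simp add: field_simps)
  have q1: "Qf (x1 - 1/2) x2 = L * L - L + 1/4 + 3/4 * (y * y)" unfolding Qf_def L_def y_def by (simp add: field_simps)
  have q2: "Qf (x1 - 1/2) (x2 + 1) = L * L + 3/4 - 3/2 * y + 3/4 * (y * y)" unfolding Qf_def L_def y_def by (simp add: field_simps)
  have L0: "0 \<le> L" "0 \<le> y" using assms unfolding L_def y_def by auto
  show ?thesis
  proof (cases "x1 + 2 * x2 + 1/2 \<ge> 0")
    case True
    hence yb: "y \<le> 2/3 * (L + 1/2)" unfolding L_def y_def by simp
    show ?thesis
    proof (cases "L \<le> 1/2")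
      case True
      have "y * y \<le> (2/3 * (L + 1/2)) * (2/3 * (L + 1/2))" using yb L0 by (intro mult_mono) auto
      moreover have "(2/3 * (L + 1/2)) * (2/3 * (L + 1/2)) = 4/9 * (L * L) + 4/9 * L + 1/9" by (simp add: field_simps)
      moreover have "0 \<le> L * (1 - 2 * L)" using True L0 by simp
      moreover have "L * (1 - 2 * L) = L - 2 * (L * L)" by (simp add: field_simps)
      ultimately show ?thesis using q1 by argo
    next
      case False
      thus ?thesis using q0 q1 assms(1) by argo
    qed
  next
    case False
    hence Lb: "L \<le> 3/2 * y - 1/2" unfolding L_def y_def by simp
    show ?thesis
    proof (cases "y \<le> 2/3")
      case True
      have "L * L \<le> (3/2 * y - 1/2) * (3/2 * y - 1/2)" using Lb L0 by (intro mult_mono) auto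
      moreover have "(3/2 * y - 1/2) * (3/2 * y - 1/2) = 9/4 * (y * y) - 3/2 * y + 1/4" by (simp add: field_simps)
      moreover have "0 \<le> (y - 1/3) * (2/3 - y)" using True Lb L0 by simp
      moreover have "(y - 1/3) * (2/3 - y) = y - y * y - 2/9" by (simp add: field_simps)
      ultimately show ?thesis using q2 by argo
    next
      case False
      thus ?thesis using q0 q2 assms(1) by argo
    qed
  qed
qed

lemma coneE:
  fixes x1 x2 :: real
  assumes "Qf x1 x2 \<le> 1/3" "x1 \<ge> 0" "x2 \<ge> 0"
  shows "Qf (x1 - 2/3) (x2 + 1/3) \<le> 1/3 \<or> Qf (x1 + 1/3) (x2 - 2/3) \<le> 1/3"
proof -
  have main: "Qf (a - 2/3) (b + 1/3) \<le> 1/3" if h: "Qf a b \<le> 1/3" "b \<ge> 0" "a \<ge> b" for a b :: real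
  proof -
    have e: "Qf (a - 2/3) (b + 1/3) = Qf a b - a + 1/3" unfolding Qf_def by (simp add: field_simps)
    have "a * b \<le> a * a" "b * b \<le> a * a" using h by (auto intro: mult_mono mult_left_mono)
    hence "Qf a b \<le> 3 * (a * a)" unfolding Qf_def by argo
    moreover have "Qf a b * Qf a b \<le> Qf a b * (1/3)" using h Qf_nonneg[of a b] by (intro mult_left_mono) auto
    ultimately have "Qf a b * Qf a b \<le> a * a" by argo
    hence "Qf a b \<le> a" using h Qf_nonneg[of a b]
      by (metis abs_of_nonneg dual_order.trans mult_le_cancel_left_pos not_le order_refl abs_le_square_iff power2_eq_square)
    thus ?thesis using e by argo
  qed
  show ?thesis
  proof (cases "x1 \<ge> x2")
    case True thus ?thesis using main[of x1 x2] assms by auto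
  next
    case False
    have "Qf (x2 - 2/3) (x1 + 1/3) \<le> 1/3" using main[of x2 x1] assms False Qf_sym by auto
    thus ?thesis using Qf_sym by metis
  qed
qed

definition G5 :: "real \<Rightarrow> real \<Rightarrow> bool" where
  "G5 s t \<longleftrightarrow> Qf s t \<le> 1/3 \<or> Qf (s - 1) t \<le> 1/3 \<or> Qf s (t - 1) \<le> 1/3 \<or>
     Qf (s - 1) (t + 1) \<le> 1/3 \<or> Qf (s + 1) (t - 1) \<le> 1/3"

lemma G5_sym: "G5 s t \<longleftrightarrow> G5 t s"
  unfolding G5_def using Qf_sym by metis

definition kite :: "real \<Rightarrow> real \<Rightarrow> bool" where
  "kite a b \<longleftrightarrow> a \<ge> 0 \<and> b \<ge> 0 \<and> 2 * a + b \<le> 1 \<and> a + 2 * b \<le> 1"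

lemma Qf_split: "Qf x1 x2 = (x1 + x2/2) * (x1 + x2/2) + 3/4 * (x2 * x2)"
  unfolding Qf_def by (simp add: field_simps)

lemma reg_coneO:
  assumes "kite a b" "Qf (s - a) (t - b) \<le> 1/3" "2 * s + t \<le> 0" "s + 2 * t \<le> 0"
  shows "G5 s t"
proof -
  have e: "Qf (s - a) (t - b) = Qf s t - (a * (2 * s + t) + b * (s + 2 * t)) + Qf a b"
    unfolding Qf_def by (simp add: field_simps)
  have "a * (2 * s + t) \<le> 0" "b * (s + 2 * t) \<le> 0" using assms unfolding kite_def
    by (auto intro: mult_nonneg_nonpos)
  thus ?thesis using e assms Qf_nonneg[of a b] unfolding G5_def by argo
qed

lemma reg_slabOm:
  assumes "kite a b" "Qf (s - a) (t - b) \<le> 1/3" "t \<le> 0" "0 \<le> 2 * s + t" "2 * s + t \<le> 1"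
  shows "G5 s t"
proof -
  have b0: "b \<ge> 0" using assms unfolding kite_def by auto
  have "(-t) * (-t) \<le> (b - t) * (b - t)" using assms b0 by (intro mult_mono) auto
  hence "t * t \<le> (t - b) * (t - b)" by (simp add: algebra_simps)
  moreover have "0 \<le> (s - a + (t - b)/2) * (s - a + (t - b)/2)" by simp
  ultimately have tt: "t * t \<le> 4/9" using Qf_split[of "s - a" "t - b"] assms(2) by argo
  have "t \<ge> -2/3"
  proof (rule ccontr)
    assume "\<not> t \<ge> -2/3"
    hence "2/3 * (2/3) < (-t) * (-t)" by (intro mult_strict_mono) auto
    thus False using tt by simp
  qed
  from slabB[OF this assms(3-5)] show ?thesis unfolding G5_def by auto
qed

lemma reg_coneM:
  assumes "kite a b" "Qf (s - a) (t - b) \<le> 1/3" "2 * s + t \<ge> 1" "t \<le> 0"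
  shows "G5 s t"
proof -
  have e: "Qf (s - a) (t - b) = Qf (s - 1/2) t + ((1 - 2 * a - b)/2) * (2 * s + t - 1) - (3 * b / 2) * t + Qf (a - 1/2) b"
    unfolding Qf_def by (simp add: field_simps)
  have "0 \<le> ((1 - 2 * a - b)/2) * (2 * s + t - 1)" "(3 * b / 2) * t \<le> 0" using assms unfolding kite_def
    by (auto intro: mult_nonneg_nonpos)
  hence "Qf (s - 1/2) t \<le> 1/3" using e assms Qf_nonneg[of "a - 1/2" b] by argo
  from coneD[OF this] assms have "Qf (s - 1/2 - 1/2) t \<le> 1/3 \<or> Qf (s - 1/2 - 1/2) (t + 1) \<le> 1/3" by auto
  thus ?thesis unfolding G5_def by auto
qed

lemma reg_slabMC:
  assumes "kite a b" "Qf (s - a) (t - b) \<le> 1/3" "2 * s + t \<ge> 1" "0 \<le> t" "t \<le> 1/3"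
  shows "G5 s t"
proof -
  have h0: "0 \<le> 2 * s + t - 1" "2 * s + t - 1 \<le> (2 * (s - a) + (t - b))" using assms unfolding kite_def by auto
  have "(2 * s + t - 1) * (2 * s + t - 1) \<le> (2 * (s - a) + (t - b)) * (2 * (s - a) + (t - b))"
    using h0 by (intro mult_mono) auto
  moreover have "(2 * (s - a) + (t - b)) * (2 * (s - a) + (t - b)) = 4 * ((s - a + (t - b)/2) * (s - a + (t - b)/2))"
    by (simp add: field_simps)
  moreover have "0 \<le> 3/4 * ((t - b) * (t - b))" by simp
  ultimately have "(2 * s + t - 1) * (2 * s + t - 1) \<le> 4/3" using Qf_split[of "s - a" "t - b"] assms(2) by argo
  from slabC[OF assms(3-5) this] show ?thesis unfolding G5_def by auto
qed

lemma reg_coneC: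
  assumes "kite a b" "Qf (s - a) (t - b) \<le> 1/3" "s \<ge> 1/3" "t \<ge> 1/3"
  shows "G5 s t"
proof -
  have e: "Qf (s - a) (t - b) = Qf (s - 1/3) (t - 1/3) + (s - 1/3) * (1 - 2 * a - b) + (t - 1/3) * (1 - a - 2 * b) + Qf (a - 1/3) (b - 1/3)"
    unfolding Qf_def by (simp add: field_simps)
  have k: "0 \<le> 1 - 2 * a - b" "0 \<le> 1 - a - 2 * b" using assms unfolding kite_def by auto
  have "0 \<le> (s - 1/3) * (1 - 2 * a - b)" "0 \<le> (t - 1/3) * (1 - a - 2 * b)"
    using k assms(3,4) by (auto intro!: mult_nonneg_nonneg)
  hence qc: "Qf (s - 1/3) (t - 1/3) \<le> 1/3" using e assms Qf_nonneg[of "a - 1/3" "b - 1/3"] by argo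
  have "Qf (s - 1/3 - 2/3) (t - 1/3 + 1/3) \<le> 1/3 \<or> Qf (s - 1/3 + 1/3) (t - 1/3 - 2/3) \<le> 1/3"
    by (rule coneE[OF qc]) (use assms in auto)
  moreover have eqs: "s - 1/3 - 2/3 = s - 1" "t - 1/3 + 1/3 = t" "s - 1/3 + 1/3 = s" "t - 1/3 - 2/3 = t - 1" by simp_all
  ultimately have "Qf (s - 1) t \<le> 1/3 \<or> Qf s (t - 1) \<le> 1/3" by (simp only: eqs)
  thus ?thesis unfolding G5_def by (elim disjE) simp_all
qed

lemma reg_kite:
  assumes "kite s t" shows "G5 s t"
  using kiteA assms unfolding kite_def G5_def by auto

lemma kite_sym: "kite a b \<longleftrightarrow> kite b a" unfolding kite_def by auto

lemma core:
  assumes "kite a b" "Qf (s - a) (t - b) \<le> 1/3"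
  shows "G5 s t"
proof -
  have sw: "kite b a" "Qf (t - b) (s - a) \<le> 1/3" using assms kite_sym Qf_sym by auto
  show ?thesis
  proof (cases "2 * s + t \<le> 0 \<and> s + 2 * t \<le> 0")
    case True 
    hence h: "2 * s + t \<le> 0" "s + 2 * t \<le> 0" by auto
    show ?thesis by (rule reg_coneO[OF assms h])
  next
    case n1: False
    show ?thesis
    proof (cases "t \<le> 0")
      case T0: True
      have h0: "0 \<le> 2 * s + t" using n1 T0 by linarith
      show ?thesis
      proof (cases "2 * s + t \<le> 1")
        case True thus ?thesis by (rule reg_slabOm[OF assms T0 h0])
      next
        case False 
        hence "1 \<le> 2 * s + t" by linarith
        thus ?thesis by (rule reg_coneM[OF assms _ T0])
      qed
    next
      case tpos: False
      show ?thesis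
      proof (cases "s \<le> 0")
        case S0: True
        have h0: "0 \<le> s + 2 * t" using n1 S0 by linarith
        have "G5 t s"
        proof (cases "s + 2 * t \<le> 1")
          case True 
          hence "2 * t + s \<le> 1" by linarith
          moreover have "0 \<le> 2 * t + s" using h0 by linarith
          ultimately show ?thesis by (intro reg_slabOm[OF sw S0])
        next
          case False 
          hence "1 \<le> 2 * t + s" by linarith
          thus ?thesis by (rule reg_coneM[OF sw _ S0])
        qed
        thus ?thesis using G5_sym[of s t] by blast
      next
        case spos: False
        show ?thesis
        proof (cases "2 * s + t \<le> 1 \<and> s + 2 * t \<le> 1")
          case True
          hence "kite s t" unfolding kite_def using tpos spos by linarith
          thus ?thesis by (rule reg_kite)
        next
          case nk: False
          show ?thesis
          proof (cases "t \<le> 1/3")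
            case True
            have "2 * s + t \<ge> 1" "0 \<le> t" using nk True tpos by linarith+
            thus ?thesis using True by (intro reg_slabMC[OF assms])
          next
            case t3: False
            show ?thesis
            proof (cases "s \<le> 1/3")
              case True
              have "2 * t + s \<ge> 1" "0 \<le> s" using nk True t3 spos by linarith+
              hence "G5 t s" using True by (intro reg_slabMC[OF sw])
              thus ?thesis using G5_sym[of s t] by blast
            next
              case False
              hence "s \<ge> 1/3" "t \<ge> 1/3" using t3 by linarith+
              thus ?thesis by (intro reg_coneC[OF assms])
            qed
          qed
        qed
      qed
    qed
  qed
qed

definition Z0 :: "(int \<times> int) set" where
  "Z0 = {(0,0),(1,0),(0,1),(1,-1),(-1,1)}"

lemma G5_Z0: "G5 s t \<Longrightarrow> \<exists>(i,j)\<in>Z0. Qf (s - of_int i) (t - of_int j) \<le> 1/3"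
  unfolding G5_def Z0_def by auto

lemma transfer:
  fixes al be ga de nx ny :: int and a b ax bx :: real
  assumes inv: "\<And>x y :: real. Qf (of_int al * x + of_int be * y) (of_int ga * x + of_int de * y) = Qf x y"
    and hsurj: "\<And>x y :: real. \<exists>x0 y0. x = of_int al * x0 + of_int be * y0 \<and> y = of_int ga * x0 + of_int de * y0"
    and k: "kite ax bx"
    and ha: "a = of_int nx + of_int al * ax + of_int be * bx"
    and hb: "b = of_int ny + of_int ga * ax + of_int de * bx"
  shows "\<exists>Z::(int \<times> int) set. finite Z \<and> card Z \<le> 5 \<and>
     (\<forall>s t. Qf (s - a) (t - b) \<le> 1/3 \<longrightarrow> (\<exists>(i,j)\<in>Z. Qf (s - of_int i) (t - of_int j) \<le> 1/3))"
proof -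
  define f where "f = (\<lambda>(i::int,j::int). (nx + al * i + be * j, ny + ga * i + de * j))"
  have fin0: "finite Z0" unfolding Z0_def by simp
  have c0: "card Z0 \<le> 5" unfolding Z0_def by (rule order_trans[OF card_insert_le_m1]) auto
  have cov: "\<exists>(i,j)\<in>f ` Z0. Qf (s - of_int i) (t - of_int j) \<le> 1/3" if h: "Qf (s - a) (t - b) \<le> 1/3" for s t
  proof -
    obtain x0 y0 where xy: "s - of_int nx = of_int al * x0 + of_int be * y0" "t - of_int ny = of_int ga * x0 + of_int de * y0"
      using hsurj[of "s - of_int nx" "t - of_int ny"] by blast
    have "s - a = of_int al * (x0 - ax) + of_int be * (y0 - bx)" "t - b = of_int ga * (x0 - ax) + of_int de * (y0 - bx)"
      using xy ha hb by (simp_all add: algebra_simps)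
    hence "Qf (x0 - ax) (y0 - bx) = Qf (s - a) (t - b)" using inv[of "x0 - ax" "y0 - bx"] by simp
    hence "Qf (x0 - ax) (y0 - bx) \<le> 1/3" using h by simp
    from G5_Z0[OF core[OF k this]] obtain i j where ij: "(i,j) \<in> Z0" "Qf (x0 - of_int i) (y0 - of_int j) \<le> 1/3"
      by blast
    have "s - of_int (nx + al * i + be * j) = of_int al * (x0 - of_int i) + of_int be * (y0 - of_int j)"
      "t - of_int (ny + ga * i + de * j) = of_int ga * (x0 - of_int i) + of_int de * (y0 - of_int j)"
      using xy by (simp_all add: algebra_simps)
    hence "Qf (s - of_int (nx + al * i + be * j)) (t - of_int (ny + ga * i + de * j)) = Qf (x0 - of_int i) (y0 - of_int j)"
      using inv[of "x0 - of_int i" "y0 - of_int j"] by simp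
    hence "Qf (s - of_int (nx + al * i + be * j)) (t - of_int (ny + ga * i + de * j)) \<le> 1/3"
      using ij(2) by simp
    moreover have "(nx + al * i + be * j, ny + ga * i + de * j) \<in> f ` Z0" using ij(1) unfolding f_def by force
    ultimately show ?thesis by blast
  qed
  show ?thesis
    apply (rule exI[of _ "f ` Z0"])
    using fin0 c0 cov card_image_le[OF fin0, of f] by auto
qed

lemma case1:
  fixes a b a' b' :: real and i0 j0 :: int
  assumes r: "0 \<le> a'" "a' \<le> 1" "0 \<le> b'" "b' \<le> 1" and c: "a' + b' \<le> 1" "2 * a' + b' \<le> 1" "a' + 2 * b' \<le> 1"
    and ab: "a = of_int i0 + a'" "b = of_int j0 + b'"
  shows "\<exists>Z::(int \<times> int) set. finite Z \<and> card Z \<le> 5 \<and>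
     (\<forall>s t. Qf (s - a) (t - b) \<le> 1/3 \<longrightarrow> (\<exists>(i,j)\<in>Z. Qf (s - of_int i) (t - of_int j) \<le> 1/3))"
proof (rule transfer[where al="1" and be="0" and ga="0" and de="1" and nx="i0" and ny="j0" and ax="a'" and bx="b'"])
  show "Qf (of_int (1) * x + of_int (0) * y) (of_int (0) * x + of_int (1) * y) = Qf x y" for x y :: real
    by (simp add: Qf_def algebra_simps)
  show "\<exists>x0 y0. x = of_int (1) * x0 + of_int (0) * y0 \<and> y = of_int (0) * x0 + of_int (1) * y0" for x y :: real
    by (rule exI[of _ "x"], rule exI[of _ "y"]) simp
  show "kite (a') (b')" using c r unfolding kite_def by auto
  show "a = of_int (i0) + of_int (1) * (a') + of_int (0) * (b')" using ab by (simp add: algebra_simps)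
  show "b = of_int (j0) + of_int (0) * (a') + of_int (1) * (b')" using ab by (simp add: algebra_simps)
qed

lemma case2:
  fixes a b a' b' :: real and i0 j0 :: int
  assumes r: "0 \<le> a'" "a' \<le> 1" "0 \<le> b'" "b' \<le> 1" and c: "a' + b' \<le> 1" "2 * a' + b' \<ge> 1" "a' \<ge> b'"
    and ab: "a = of_int i0 + a'" "b = of_int j0 + b'"
  shows "\<exists>Z::(int \<times> int) set. finite Z \<and> card Z \<le> 5 \<and>
     (\<forall>s t. Qf (s - a) (t - b) \<le> 1/3 \<longrightarrow> (\<exists>(i,j)\<in>Z. Qf (s - of_int i) (t - of_int j) \<le> 1/3))"
proof (rule transfer[where al="-1" and be="-1" and ga="1" and de="0" and nx="i0+1" and ny="j0" and ax="b'" and bx="1 - a' - b'"])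
  show "Qf (of_int (-1) * x + of_int (-1) * y) (of_int (1) * x + of_int (0) * y) = Qf x y" for x y :: real
    by (simp add: Qf_def algebra_simps)
  show "\<exists>x0 y0. x = of_int (-1) * x0 + of_int (-1) * y0 \<and> y = of_int (1) * x0 + of_int (0) * y0" for x y :: real
    by (rule exI[of _ "y"], rule exI[of _ "- x - y"]) simp
  show "kite (b') (1 - a' - b')" using c r unfolding kite_def by auto
  show "a = of_int (i0+1) + of_int (-1) * (b') + of_int (-1) * (1 - a' - b')" using ab by (simp add: algebra_simps)
  show "b = of_int (j0) + of_int (1) * (b') + of_int (0) * (1 - a' - b')" using ab by (simp add: algebra_simps)
qed

lemma case3:
  fixes a b a' b' :: real and i0 j0 :: int
  assumes r: "0 \<le> a'" "a' \<le> 1" "0 \<le> b'" "b' \<le> 1" and c: "a' + b' \<le> 1" "a' + 2 * b' \<ge> 1" "b' \<ge> a'"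
    and ab: "a = of_int i0 + a'" "b = of_int j0 + b'"
  shows "\<exists>Z::(int \<times> int) set. finite Z \<and> card Z \<le> 5 \<and>
     (\<forall>s t. Qf (s - a) (t - b) \<le> 1/3 \<longrightarrow> (\<exists>(i,j)\<in>Z. Qf (s - of_int i) (t - of_int j) \<le> 1/3))"
proof (rule transfer[where al="0" and be="1" and ga="-1" and de="-1" and nx="i0" and ny="j0+1" and ax="1 - a' - b'" and bx="a'"])
  show "Qf (of_int (0) * x + of_int (1) * y) (of_int (-1) * x + of_int (-1) * y) = Qf x y" for x y :: real
    by (simp add: Qf_def algebra_simps)
  show "\<exists>x0 y0. x = of_int (0) * x0 + of_int (1) * y0 \<and> y = of_int (-1) * x0 + of_int (-1) * y0" for x y :: real
    by (rule exI[of _ "- x - y"], rule exI[of _ "x"]) simp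
  show "kite (1 - a' - b') (a')" using c r unfolding kite_def by auto
  show "a = of_int (i0) + of_int (0) * (1 - a' - b') + of_int (1) * (a')" using ab by (simp add: algebra_simps)
  show "b = of_int (j0+1) + of_int (-1) * (1 - a' - b') + of_int (-1) * (a')" using ab by (simp add: algebra_simps)
qed

lemma case4:
  fixes a b a' b' :: real and i0 j0 :: int
  assumes r: "0 \<le> a'" "a' \<le> 1" "0 \<le> b'" "b' \<le> 1" and c: "a' + b' \<ge> 1" "a' + 2 * b' \<ge> 2" "2 * a' + b' \<ge> 2"
    and ab: "a = of_int i0 + a'" "b = of_int j0 + b'"
  shows "\<exists>Z::(int \<times> int) set. finite Z \<and> card Z \<le> 5 \<and>
     (\<forall>s t. Qf (s - a) (t - b) \<le> 1/3 \<longrightarrow> (\<exists>(i,j)\<in>Z. Qf (s - of_int i) (t - of_int j) \<le> 1/3))"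
proof (rule transfer[where al="-1" and be="0" and ga="0" and de="-1" and nx="i0+1" and ny="j0+1" and ax="1 - a'" and bx="1 - b'"])
  show "Qf (of_int (-1) * x + of_int (0) * y) (of_int (0) * x + of_int (-1) * y) = Qf x y" for x y :: real
    by (simp add: Qf_def algebra_simps)
  show "\<exists>x0 y0. x = of_int (-1) * x0 + of_int (0) * y0 \<and> y = of_int (0) * x0 + of_int (-1) * y0" for x y :: real
    by (rule exI[of _ "- x"], rule exI[of _ "- y"]) simp
  show "kite (1 - a') (1 - b')" using c r unfolding kite_def by auto
  show "a = of_int (i0+1) + of_int (-1) * (1 - a') + of_int (0) * (1 - b')" using ab by (simp add: algebra_simps)
  show "b = of_int (j0+1) + of_int (0) * (1 - a') + of_int (-1) * (1 - b')" using ab by (simp add: algebra_simps)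
qed

lemma case5:
  fixes a b a' b' :: real and i0 j0 :: int
  assumes r: "0 \<le> a'" "a' \<le> 1" "0 \<le> b'" "b' \<le> 1" and c: "a' + b' \<ge> 1" "a' + 2 * b' \<le> 2" "a' \<ge> b'"
    and ab: "a = of_int i0 + a'" "b = of_int j0 + b'"
  shows "\<exists>Z::(int \<times> int) set. finite Z \<and> card Z \<le> 5 \<and>
     (\<forall>s t. Qf (s - a) (t - b) \<le> 1/3 \<longrightarrow> (\<exists>(i,j)\<in>Z. Qf (s - of_int i) (t - of_int j) \<le> 1/3))"
proof (rule transfer[where al="0" and be="-1" and ga="1" and de="1" and nx="i0+1" and ny="j0" and ax="a' + b' - 1" and bx="1 - a'"])
  show "Qf (of_int (0) * x + of_int (-1) * y) (of_int (1) * x + of_int (1) * y) = Qf x y" for x y :: real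
    by (simp add: Qf_def algebra_simps)
  show "\<exists>x0 y0. x = of_int (0) * x0 + of_int (-1) * y0 \<and> y = of_int (1) * x0 + of_int (1) * y0" for x y :: real
    by (rule exI[of _ "x + y"], rule exI[of _ "- x"]) simp
  show "kite (a' + b' - 1) (1 - a')" using c r unfolding kite_def by auto
  show "a = of_int (i0+1) + of_int (0) * (a' + b' - 1) + of_int (-1) * (1 - a')" using ab by (simp add: algebra_simps)
  show "b = of_int (j0) + of_int (1) * (a' + b' - 1) + of_int (1) * (1 - a')" using ab by (simp add: algebra_simps)
qed

lemma case6:
  fixes a b a' b' :: real and i0 j0 :: int
  assumes r: "0 \<le> a'" "a' \<le> 1" "0 \<le> b'" "b' \<le> 1" and c: "a' + b' \<ge> 1" "2 * a' + b' \<le> 2" "b' \<ge> a'"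
    and ab: "a = of_int i0 + a'" "b = of_int j0 + b'"
  shows "\<exists>Z::(int \<times> int) set. finite Z \<and> card Z \<le> 5 \<and>
     (\<forall>s t. Qf (s - a) (t - b) \<le> 1/3 \<longrightarrow> (\<exists>(i,j)\<in>Z. Qf (s - of_int i) (t - of_int j) \<le> 1/3))"
proof (rule transfer[where al="1" and be="1" and ga="-1" and de="0" and nx="i0" and ny="j0+1" and ax="1 - b'" and bx="a' + b' - 1"])
  show "Qf (of_int (1) * x + of_int (1) * y) (of_int (-1) * x + of_int (0) * y) = Qf x y" for x y :: real
    by (simp add: Qf_def algebra_simps)
  show "\<exists>x0 y0. x = of_int (1) * x0 + of_int (1) * y0 \<and> y = of_int (-1) * x0 + of_int (0) * y0" for x y :: real
    by (rule exI[of _ "- y"], rule exI[of _ "x + y"]) simp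
  show "kite (1 - b') (a' + b' - 1)" using c r unfolding kite_def by auto
  show "a = of_int (i0) + of_int (1) * (1 - b') + of_int (1) * (a' + b' - 1)" using ab by (simp add: algebra_simps)
  show "b = of_int (j0+1) + of_int (-1) * (1 - b') + of_int (0) * (a' + b' - 1)" using ab by (simp add: algebra_simps)
qed

lemma reduce:
  fixes a b :: real
  shows "\<exists>Z::(int \<times> int) set. finite Z \<and> card Z \<le> 5 \<and>
     (\<forall>s t. Qf (s - a) (t - b) \<le> 1/3 \<longrightarrow> (\<exists>(i,j)\<in>Z. Qf (s - of_int i) (t - of_int j) \<le> 1/3))"
proof -
  define i0 where "i0 = \<lfloor>a\<rfloor>"
  define j0 where "j0 = \<lfloor>b\<rfloor>"
  define a' where "a' = a - of_int i0"
  define b' where "b' = b - of_int j0"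
  have f1: "of_int \<lfloor>a\<rfloor> \<le> a" "a < of_int \<lfloor>a\<rfloor> + 1" by (rule of_int_floor_le, rule real_of_int_floor_add_one_gt)
  have f2: "of_int \<lfloor>b\<rfloor> \<le> b" "b < of_int \<lfloor>b\<rfloor> + 1" by (rule of_int_floor_le, rule real_of_int_floor_add_one_gt)
  have r: "0 \<le> a'" "a' \<le> 1" "0 \<le> b'" "b' \<le> 1" unfolding a'_def b'_def i0_def j0_def using f1 f2 by linarith+
  have ab: "a = of_int i0 + a'" "b = of_int j0 + b'" unfolding a'_def b'_def by simp_all
  show ?thesis
  proof (cases "a' + b' \<le> 1")
    case T: True
    show ?thesis
    proof (cases "2 * a' + b' \<le> 1 \<and> a' + 2 * b' \<le> 1")
      case True thus ?thesis using case1[OF r T _ _ ab] by blast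
    next
      case F: False
      show ?thesis
      proof (cases "a' \<ge> b'")
        case True
        have "2 * a' + b' \<ge> 1" using F True by linarith
        thus ?thesis using case2[OF r T _ True ab] by blast
      next
        case False
        hence "b' \<ge> a'" by linarith
        moreover have "a' + 2 * b' \<ge> 1" using F False by linarith
        ultimately show ?thesis using case3[OF r T _ _ ab] by blast
      qed
    qed
  next
    case F: False
    hence T: "a' + b' \<ge> 1" by linarith
    show ?thesis
    proof (cases "a' \<ge> b'")
      case True
      show ?thesis
      proof (cases "a' + 2 * b' \<le> 2")
        case True2: True thus ?thesis using case5[OF r T _ True ab] by blast
      next
        case False
        have "a' + 2 * b' \<ge> 2" "2 * a' + b' \<ge> 2" using False True by linarith+
        thus ?thesis using case4[OF r T _ _ ab] by blast
      qed
    next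
      case False
      hence ba: "b' \<ge> a'" by linarith
      show ?thesis
      proof (cases "2 * a' + b' \<le> 2")
        case True thus ?thesis using case6[OF r T _ ba ab] by blast
      next
        case False
        have "a' + 2 * b' \<ge> 2" "2 * a' + b' \<ge> 2" using False ba by linarith+
        thus ?thesis using case4[OF r T _ _ ab] by blast
      qed
    qed
  qed
qed

definition phi :: "real \<Rightarrow> complex \<Rightarrow> real \<Rightarrow> real \<Rightarrow> real \<Rightarrow> complex" where
  "phi r c th x y = c + cis th * (complex_of_real x * complex_of_real (sqrt 3 * r)
      + complex_of_real y * complex_of_real (sqrt 3 * r) * cis (pi / 3))"

lemma phi_int: "phi r c th (of_int i) (of_int j) \<in> hex_centers r c th"
  unfolding phi_def hex_centers_def
  by (rule CollectI, rule exI[of _ i], rule exI[of _ j]) simp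

lemma cmod_lat: "(cmod (complex_of_real d1 + complex_of_real d2 * cis (pi/3)))^2 = Qf d1 d2"
proof -
  have re: "Re (complex_of_real d1 + complex_of_real d2 * cis (pi/3)) = d1 + d2/2"
    by (simp add: cos_60)
  have im: "Im (complex_of_real d1 + complex_of_real d2 * cis (pi/3)) = d2 * (sqrt 3 / 2)"
    by (simp add: sin_60)
  have s3: "sqrt 3 * sqrt 3 = (3::real)" by simp
  have eq: "(d1 + d2/2)^2 + (d2 * (sqrt 3 / 2))^2 = Qf d1 d2"
    unfolding Qf_def power2_eq_square using s3 by (simp add: field_simps)
  show ?thesis unfolding cmod_power2 re im by (rule eq)
qed

lemma phi_diff: "phi r c th x y - phi r c th x' y' =
   cis th * complex_of_real (sqrt 3 * r) * (complex_of_real (x - x') + complex_of_real (y - y') * cis (pi/3))"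
  unfolding phi_def by (simp add: algebra_simps)

lemma phi_dist:
  assumes "r > 0"
  shows "(cmod (phi r c th x y - phi r c th x' y'))^2 = 3 * r^2 * Qf (x - x') (y - y')"
proof -
  have "cmod (phi r c th x y - phi r c th x' y') = (sqrt 3 * r) * cmod (complex_of_real (x - x') + complex_of_real (y - y') * cis (pi/3))"
    unfolding phi_diff using assms by (simp add: norm_mult)
  hence "(cmod (phi r c th x y - phi r c th x' y'))^2 = (sqrt 3 * r)^2 * Qf (x - x') (y - y')"
    by (simp add: power_mult_distrib cmod_lat[symmetric])
  thus ?thesis by (simp add: power_mult_distrib)
qed

lemma phi_surj:
  assumes "r > 0"
  shows "\<exists>x y. phi r c th x y = z"
proof -
  define K where "K = cis th * complex_of_real (sqrt 3 * r)"
  have K0: "K \<noteq> 0" unfolding K_def using assms by simp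
  define w where "w = (z - c) / K"
  define y0 where "y0 = Im w * 2 / sqrt 3"
  define x0 where "x0 = Re w - y0 / 2"
  have hw: "complex_of_real x0 + complex_of_real y0 * cis (pi/3) = w"
    by (rule complex_eqI) (simp_all add: x0_def y0_def cos_60 sin_60 field_simps)
  have "phi r c th x0 y0 = c + K * (complex_of_real x0 + complex_of_real y0 * cis (pi/3))"
    unfolding phi_def K_def by (simp add: algebra_simps)
  also have "\<dots> = z" unfolding hw w_def using K0 by simp
  finally show ?thesis by blast
qed

theorem lemma4:
  fixes r th :: real and c p :: complex
  assumes "r > 0"
  shows "\<exists>S. S \<subseteq> hex_centers r c th \<and> finite S \<and> card S \<le> 5 \<and>
             cball p r \<subseteq> (\<Union>z\<in>S. grid_circle r z)"
proof -
  obtain a b where pab: "phi r c th a b = p" using phi_surj[OF assms] by blast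
  obtain Z :: "(int \<times> int) set" where Z: "finite Z" "card Z \<le> 5"
    "\<And>s t. Qf (s - a) (t - b) \<le> 1/3 \<Longrightarrow> \<exists>(i,j)\<in>Z. Qf (s - of_int i) (t - of_int j) \<le> 1/3"
    using reduce[of a b] by blast
  define g where "g = (\<lambda>(i::int, j::int). phi r c th (of_int i) (of_int j))"
  define S where "S = g ` Z"
  have "S \<subseteq> hex_centers r c th" unfolding S_def g_def using phi_int by auto
  moreover have "finite S" unfolding S_def using Z by simp
  moreover have "card S \<le> 5" unfolding S_def using card_image_le[OF Z(1), of g] Z(2) by linarith
  moreover have "cball p r \<subseteq> (\<Union>z\<in>S. grid_circle r z)"
  proof
    fix y assume "y \<in> cball p r"
    hence dy: "cmod (y - p) \<le> r" by (simp add: dist_norm norm_minus_commute)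
    obtain s t where yst: "phi r c th s t = y" using phi_surj[OF assms] by blast
    have "(cmod (y - p))^2 \<le> r^2" using dy by (intro power_mono) auto
    hence "3 * r^2 * Qf (s - a) (t - b) \<le> r^2" using phi_dist[OF assms, of c th s t a b] yst pab by simp
    hence "Qf (s - a) (t - b) \<le> 1/3" using assms by (simp add: field_simps)
    from Z(3)[OF this] obtain i j where ij: "(i,j) \<in> Z" "Qf (s - of_int i) (t - of_int j) \<le> 1/3" by blast
    have "(cmod (y - g (i,j)))^2 = 3 * r^2 * Qf (s - of_int i) (t - of_int j)"
      unfolding g_def using phi_dist[OF assms, of c th s t "of_int i" "of_int j"] yst by simp
    also have "\<dots> \<le> r^2" using ij(2) assms by (simp add: field_simps)
    finally have "cmod (y - g (i,j)) \<le> r" using assms by (simp add: power2_le_iff_abs_le)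
    hence "y \<in> grid_circle r (g (i,j))" unfolding grid_circle_def by (simp add: dist_norm norm_minus_commute)
    moreover have "g (i,j) \<in> S" unfolding S_def using ij(1) by blast
    ultimately show "y \<in> (\<Union>z\<in>S. grid_circle r z)" by blast
  qed
  ultimately show ?thesis by blast
qed

end
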